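(* Let $Q$ be an absolutely continuous stochastic algorithm with Hamiltonian $H$. Assume that for every $h\in\mathcal{H}$ there is $\rho(h)>0$ such that $\mathbb{E}\left[e^{\lambda(h(X)-\mathbb{E}[h(X')])}\right]\le e^{\lambda^2\rho(h)^2/2}$ for all $\lambda\in\mathbb{R}$, and that there is $\sigma>0$ such that for all $\lambda\in\mathbb{R}$, $k\in[n]$, $h\in\mathcal{H}$ and $\mathbf{x}\in\mathcal{X}^n$, $$\mathbb{E}_{X\sim\mu}\left[e^{\lambda\left(H(h,S^k_X\mathbf{x})-\mathbb{E}_{X'\sim\mu}[H(h,S^k_{X'}\mathbf{x})]\right)}\right]\le e^{\lambda^2\sigma^2/2}.$$ Then for $\delta>0$, with probability at least $1-\delta$ as $\mathbf{X}\sim\mu^n$ and $h\sim Q_{\mathbf{X}}$, $$\Delta(h,\mathbf{X})\le \rho(h)\left(\sqrt{32}\,\sigma+\sqrt{\frac{4\ln(1/\delta)}{n}}\right).$$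
   Context: $\mathcal{X}$ is a measurable space with probability measure $\mu$, $\mathbf{X}=(X_1,\dots,X_n)\sim\mu^n$, $X,X'\sim\mu$ independent. $\mathcal{H}$ is a measurable space of measurable functions $h:\mathcal{X}\to[0,\infty)$ with nonnegative a-priori measure $\pi$. A stochastic algorithm $Q:\mathbf{x}\mapsto Q_{\mathbf{x}}$ (probability measures on $\mathcal{H}$) is absolutely continuous if each $Q_{\mathbf{x}}$ and $\pi$ are mutually absolutely continuous. A measurable $H:\mathcal{H}\times\mathcal{X}^n\to\mathbb{R}$ is a Hamiltonian for $Q$ if $dQ_{\mathbf{x}}(h)=e^{H(h,\mathbf{x})}d\pi(h)/Z(\mathbf{x})$ with $Z(\mathbf{x})=\int_{\mathcal{H}}e^{H(h,\mathbf{x})}d\pi(h)$ finite and positive. $[n]=\{1,\dots,n\}$; $S^k_y\mathbf{x}$ replaces the $k$-th coordinate of $\mathbf{x}$ by $y$. Generalization gap: $\Delta(h,\mathbf{x})=\mathbb{E}[h(X)]-\frac1n\sum_{i=1}^n h(x_i)$. Probability "as $\mathbf{X}\sim\mu^n$ and $h\sim Q_{\mathbf{X}}$" is w.r.t. the joint law. All functions are assumed to have finite exponential moments of all orders (and $\int_{\mathcal{H}}e^{\mathbb{E}[H(h,\mathbf{X})]}d\pi(h)$ is finite and positive). *)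

theory Defs
  imports "HOL-Probability.Probability"
begin

text \<open>Sample space of n-samples: \<mu>^n, indices [n] rendered as {0..<n}.\<close>
abbreviation sample_space :: "nat \<Rightarrow> 'a measure \<Rightarrow> (nat \<Rightarrow> 'a) measure" where
  "sample_space n M \<equiv> PiM {0..<n} (\<lambda>_. M)"

definition gen_gap :: "'a measure \<Rightarrow> nat \<Rightarrow> ('a \<Rightarrow> real) \<Rightarrow> (nat \<Rightarrow> 'a) \<Rightarrow> real" where
  "gen_gap M n h x = (\<integral>y. h y \<partial>M) - (\<Sum>i<n. h (x i)) / real n"

definition partition_fun :: "('b measure) \<Rightarrow> ('b \<Rightarrow> 'c \<Rightarrow> real) \<Rightarrow> 'c \<Rightarrow> real" where
  "partition_fun Pr H x = (\<integral>h. exp (H h x) \<partial>Pr)"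

definition abs_cont_alg :: "'b measure \<Rightarrow> 'c measure \<Rightarrow> ('c \<Rightarrow> 'b measure) \<Rightarrow> bool" where
  "abs_cont_alg Pr XS Q \<longleftrightarrow> (\<forall>x\<in>space XS. prob_space (Q x) \<and> sets (Q x) = sets Pr \<and>
       absolutely_continuous Pr (Q x) \<and> absolutely_continuous (Q x) Pr)"

definition is_hamiltonian :: "'b measure \<Rightarrow> 'c measure \<Rightarrow> ('c \<Rightarrow> 'b measure) \<Rightarrow> ('b \<Rightarrow> 'c \<Rightarrow> real) \<Rightarrow> bool" where
  "is_hamiltonian Pr XS Q H \<longleftrightarrow>
     (\<lambda>(h, x). H h x) \<in> borel_measurable (Pr \<Otimes>\<^sub>M XS) \<and>
     (\<forall>x\<in>space XS. integrable Pr (\<lambda>h. exp (H h x)) \<and> partition_fun Pr H x > 0 \<and>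
        Q x = density Pr (\<lambda>h. ennreal (exp (H h x) / partition_fun Pr H x)))"

end

theory Submission
  imports Defs
begin


lemma jensen_exp:
  fixes g :: "'b \<Rightarrow> real"
  assumes N: "prob_space N" and g: "integrable N g"
  shows "ennreal (exp (\<integral>x. g x \<partial>N)) \<le> (\<integral>\<^sup>+x. ennreal (exp (g x)) \<partial>N)"
proof (cases "integrable N (\<lambda>x. exp (g x))")
  case True
  have "ennreal (exp (\<integral>x. g x \<partial>N)) \<le> ennreal (\<integral>x. exp (g x) \<partial>N)"
    apply (rule ennreal_leI) using prob_space.jensens_inequality[OF N g, of UNIV 0 0 exp] True exp_convex by auto
  also have "\<dots> = (\<integral>\<^sup>+x. ennreal (exp (g x)) \<partial>N)"
    by (rule nn_integral_eq_integral[symmetric]) (use True in auto)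
  finally show ?thesis .
next
  case False
  have m: "(\<lambda>x. exp (g x)) \<in> borel_measurable N" using g by auto
  have "(\<integral>\<^sup>+x. ennreal (exp (g x)) \<partial>N) = \<infinity>"
  proof (rule ccontr)
    assume "(\<integral>\<^sup>+x. ennreal (exp (g x)) \<partial>N) \<noteq> \<infinity>"
    then have "integrable N (\<lambda>x. exp (g x))"
      using m by (intro integrableI_bounded) (auto simp: less_top)
    with False show False by simp
  qed
  then show ?thesis by simp
qed

lemma abs_nn_bound:
  fixes D :: "'b \<Rightarrow> real"
  assumes Dm: "D \<in> borel_measurable N"
    and p: "(\<integral>\<^sup>+y. ennreal (exp (D y)) \<partial>N) \<le> ennreal a"
    and q: "(\<integral>\<^sup>+y. ennreal (exp (- D y)) \<partial>N) \<le> ennreal a"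
  shows "(\<integral>\<^sup>+y. ennreal (\<bar>D y\<bar>) \<partial>N) \<le> ennreal (2 * a)"
proof -
  have "(\<integral>\<^sup>+y. ennreal (\<bar>D y\<bar>) \<partial>N) \<le> (\<integral>\<^sup>+y. ennreal (exp (D y)) + ennreal (exp (- D y)) \<partial>N)"
  proof (rule nn_integral_mono)
    fix y
    have "\<bar>D y\<bar> \<le> exp (D y) + exp (- D y)"
    proof (cases "D y \<ge> 0")
      case True
      then show ?thesis using exp_ge_add_one_self[of "D y"] exp_gt_zero[of "- D y"] by linarith
    next
      case False
      then show ?thesis using exp_ge_add_one_self[of "- D y"] exp_gt_zero[of "D y"] by linarith
    qed
    then show "ennreal (\<bar>D y\<bar>) \<le> ennreal (exp (D y)) + ennreal (exp (- D y))"
      by (simp add: ennreal_plus[symmetric] del: ennreal_plus)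
  qed
  also have "\<dots> = (\<integral>\<^sup>+y. ennreal (exp (D y)) \<partial>N) + (\<integral>\<^sup>+y. ennreal (exp (- D y)) \<partial>N)"
    by (rule nn_integral_add) (use Dm in auto)
  also have "\<dots> \<le> ennreal a + ennreal a" using p q by (rule add_mono)
  also have "\<dots> \<le> ennreal (2 * a)"
    by (cases "a \<ge> 0") (auto simp: ennreal_plus[symmetric] ennreal_neg simp del: ennreal_plus)
  finally show ?thesis .
qed

lemma sec_integrable:
  fixes \<phi> :: "'a \<Rightarrow> 'a \<Rightarrow> real"
  assumes M: "prob_space M"
    and \<phi>m: "(\<lambda>(z, y). \<phi> z y) \<in> borel_measurable (M \<Otimes>\<^sub>M M)"
    and i1: "\<forall>y\<in>space M. integrable M (\<lambda>z. \<phi> z y)"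
    and i2: "\<forall>z\<in>space M. integrable M (\<lambda>y. \<phi> z y)"
    and C: "\<forall>z\<in>space M. (\<integral>\<^sup>+y. ennreal \<bar>\<phi> z y - (\<integral>y'. \<phi> z y' \<partial>M)\<bar> \<partial>M) \<le> ennreal C"
  shows "integrable (M \<Otimes>\<^sub>M M) (\<lambda>(z, y). \<phi> z y)"
proof -
  interpret M: prob_space M by fact
  interpret P: pair_sigma_finite M M by unfold_locales
  define mk where "mk z = (\<integral>y. \<phi> z y \<partial>M)" for z
  have mkm: "mk \<in> borel_measurable M"
    unfolding mk_def by (rule M.borel_measurable_lebesgue_integral) (use \<phi>m in simp)
  have dm: "(\<lambda>(z, y). ennreal \<bar>\<phi> z y - mk z\<bar>) \<in> borel_measurable (M \<Otimes>\<^sub>M M)"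
    using \<phi>m mkm by measurable
  have T: "(\<integral>\<^sup>+y. (\<integral>\<^sup>+z. ennreal \<bar>\<phi> z y - mk z\<bar> \<partial>M) \<partial>M) \<le> ennreal C"
  proof -
    have "(\<integral>\<^sup>+y. (\<integral>\<^sup>+z. ennreal \<bar>\<phi> z y - mk z\<bar> \<partial>M) \<partial>M)
        = (\<integral>\<^sup>+z. (\<integral>\<^sup>+y. ennreal \<bar>\<phi> z y - mk z\<bar> \<partial>M) \<partial>M)"
      by (rule P.Fubini') (use dm in simp)
    also have "\<dots> \<le> (\<integral>\<^sup>+z. ennreal C \<partial>M)"
      by (rule nn_integral_mono) (use C in \<open>auto simp: mk_def\<close>)
    also have "\<dots> = ennreal C" by (simp add: M.emeasure_space_1)
    finally show ?thesis .
  qed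
  have "\<exists>y0\<in>space M. (\<integral>\<^sup>+z. ennreal \<bar>\<phi> z y0 - mk z\<bar> \<partial>M) < \<infinity>"
  proof (rule ccontr)
    assume "\<not> ?thesis"
    then have inf: "\<forall>y\<in>space M. (\<integral>\<^sup>+z. ennreal \<bar>\<phi> z y - mk z\<bar> \<partial>M) = \<infinity>"
      by (simp add: less_top[symmetric])
    have "(\<integral>\<^sup>+y. (\<integral>\<^sup>+z. ennreal \<bar>\<phi> z y - mk z\<bar> \<partial>M) \<partial>M) = (\<integral>\<^sup>+y. \<infinity> \<partial>M)"
      by (rule nn_integral_cong) (use inf in simp)
    also have "\<dots> = \<infinity>" by (simp add: M.emeasure_space_1)
    finally show False using T by (simp add: top_unique)
  qed
  then obtain y0 where y0: "y0 \<in> space M" "(\<integral>\<^sup>+z. ennreal \<bar>\<phi> z y0 - mk z\<bar> \<partial>M) < \<infinity>"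
    by blast
  have d: "integrable M (\<lambda>z. \<phi> z y0 - mk z)"
    apply (rule integrableI_bounded)
    using \<phi>m mkm y0 apply measurable
    using y0 by simp
  have "integrable M (\<lambda>z. \<phi> z y0 - (\<phi> z y0 - mk z))"
    by (rule Bochner_Integration.integrable_diff[OF bspec[OF i1 y0(1)] d])
  then have mki: "integrable M mk" by simp
  have "(\<integral>\<^sup>+x. ennreal (norm ((\<lambda>(z, y). \<phi> z y) x)) \<partial>(M \<Otimes>\<^sub>M M))
      = (\<integral>\<^sup>+x. (\<lambda>(z, y). ennreal \<bar>\<phi> z y\<bar>) x \<partial>(M \<Otimes>\<^sub>M M))"
    by (rule nn_integral_cong) (auto split: prod.split)
  also have "\<dots> = (\<integral>\<^sup>+z. (\<integral>\<^sup>+y. ennreal \<bar>\<phi> z y\<bar> \<partial>M) \<partial>M)"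
  proof -
    have meas: "(\<lambda>(z, y). ennreal \<bar>\<phi> z y\<bar>) \<in> borel_measurable (M \<Otimes>\<^sub>M M)"
      using \<phi>m by measurable
    show ?thesis using M.nn_integral_fst[OF meas] by simp
  qed
  also have "\<dots> \<le> (\<integral>\<^sup>+z. (\<integral>\<^sup>+y. ennreal \<bar>\<phi> z y - mk z\<bar> + ennreal \<bar>mk z\<bar> \<partial>M) \<partial>M)"
    by (intro nn_integral_mono) (auto simp: ennreal_plus[symmetric] simp del: ennreal_plus)
  also have "\<dots> = (\<integral>\<^sup>+z. (\<integral>\<^sup>+y. ennreal \<bar>\<phi> z y - mk z\<bar> \<partial>M) + ennreal \<bar>mk z\<bar> \<partial>M)"
  proof (rule nn_integral_cong)
    fix z assume z: "z \<in> space M"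
    have "(\<lambda>y. \<phi> z y) \<in> borel_measurable M" using i2 z by auto
    then show "(\<integral>\<^sup>+y. ennreal \<bar>\<phi> z y - mk z\<bar> + ennreal \<bar>mk z\<bar> \<partial>M)
      = (\<integral>\<^sup>+y. ennreal \<bar>\<phi> z y - mk z\<bar> \<partial>M) + ennreal \<bar>mk z\<bar>"
      by (subst nn_integral_add) (auto simp: M.emeasure_space_1)
  qed
  also have "\<dots> \<le> (\<integral>\<^sup>+z. ennreal C + ennreal \<bar>mk z\<bar> \<partial>M)"
    by (intro nn_integral_mono add_mono) (use C in \<open>auto simp: mk_def\<close>)
  also have "\<dots> = ennreal C + (\<integral>\<^sup>+z. ennreal \<bar>mk z\<bar> \<partial>M)"
    using mkm by (subst nn_integral_add) (auto simp: M.emeasure_space_1)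
  also have "\<dots> < \<infinity>"
    using mki by (simp add: integrable_iff_bounded)
  finally show ?thesis
    by (intro integrableI_bounded) (use \<phi>m in auto)
qed

lemma PS_interp: "prob_space M \<Longrightarrow> product_prob_space (\<lambda>_. M)"
  by (simp add: product_prob_space_def product_prob_space_axioms_def product_sigma_finite_def
      prob_space_imp_sigma_finite)

lemma upd_space_ins:
  "x \<in> space (PiM I (\<lambda>_. M)) \<Longrightarrow> y \<in> space M \<Longrightarrow> x(k:=y) \<in> space (PiM (insert k I) (\<lambda>_. M))"
  by (auto simp: space_PiM PiE_iff extensional_def)

lemma upd_space_in:
  "k \<in> I \<Longrightarrow> x \<in> space (PiM I (\<lambda>_. M)) \<Longrightarrow> y \<in> space M \<Longrightarrow> x(k:=y) \<in> space (PiM I (\<lambda>_. M))"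
  by (auto simp: space_PiM PiE_iff extensional_def)

lemma tens:
  fixes M :: "'a measure" and F :: "(nat \<Rightarrow> 'a) \<Rightarrow> real" and s l :: real
  assumes M: "prob_space M"
  and Fi: "integrable (PiM {0..<m} (\<lambda>_. M)) F"
  and Fk: "\<forall>x\<in>space (PiM {0..<m} (\<lambda>_. M)). \<forall>k<m. integrable M (\<lambda>y. F (x(k:=y)))"
  and Fs: "\<forall>l. \<forall>x\<in>space (PiM {0..<m} (\<lambda>_. M)). \<forall>k<m.
     (\<integral>\<^sup>+y. ennreal (exp (l * (F (x(k:=y)) - (\<integral>y'. F (x(k:=y')) \<partial>M)))) \<partial>M) \<le> ennreal (exp (l^2 * s^2/2))"
  shows "(\<integral>\<^sup>+x. ennreal (exp (l * (F x - (\<integral>x. F x \<partial>PiM {0..<m} (\<lambda>_. M))))) \<partial>PiM {0..<m} (\<lambda>_. M))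
     \<le> ennreal (exp (real m * l^2 * s^2/2))"
  using Fi Fk Fs
proof (induction m arbitrary: F)
  case 0
  interpret M: prob_space M by fact
  interpret P: prob_space "PiM {0..<0::nat} (\<lambda>_. M)"
    by (intro prob_space_PiM) (use M in auto)
  have e: "{0..<0::nat} = {}" by simp
  have sp: "space (PiM {0..<0::nat} (\<lambda>_. M)) = {\<lambda>_. undefined}" unfolding e by (simp add: space_PiM)
  have "(\<integral>x. F x \<partial>PiM {0..<0::nat} (\<lambda>_. M)) = (\<integral>x. F (\<lambda>_. undefined) \<partial>PiM {0..<0::nat} (\<lambda>_. M))"
  proof (rule Bochner_Integration.integral_cong)
    fix x assume "x \<in> space (PiM {0..<0::nat} (\<lambda>_. M))"
    then have "x = (\<lambda>_. undefined)" unfolding sp by simp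
    then show "F x = F (\<lambda>_. undefined)" using P.prob_space[unfolded e] by simp
  qed simp
  then have c: "(\<integral>x. F x \<partial>PiM {0..<0::nat} (\<lambda>_. M)) = F (\<lambda>_. undefined)" using P.prob_space[unfolded e] by simp
  have "(\<integral>\<^sup>+x. ennreal (exp (l * (F x - (\<integral>x. F x \<partial>PiM {0..<0::nat} (\<lambda>_. M))))) \<partial>PiM {0..<0::nat} (\<lambda>_. M))
      = (\<integral>\<^sup>+x. 1 \<partial>PiM {0..<0::nat} (\<lambda>_. M))"
    by (rule nn_integral_cong) (metis sp c singletonD diff_self mult_zero_right exp_zero ennreal_1)
  also have "\<dots> = 1" using P.emeasure_space_1[unfolded e] by simp
  finally show ?case by simp
next
  case (Suc m)
  interpret M: prob_space M by fact
  interpret PS: product_prob_space "\<lambda>_. M" using M by (rule PS_interp)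
  interpret MM: pair_sigma_finite M M by unfold_locales
  let ?P = "PiM {0..<m} (\<lambda>_. M)"
  let ?Q = "PiM {0..<Suc m} (\<lambda>_. M)"
  have Q: "{0..<Suc m} = insert m {0..<m}" by auto
  have nm: "m \<notin> {0..<m}" by simp
  obtain y0 where y0: "y0 \<in> space M" using M.not_empty by blast
  have Fm: "F \<in> borel_measurable ?Q" using Suc.prems(1) by auto
  have upd: "(\<lambda>(x, y). x(m:=y)) \<in> measurable (?P \<Otimes>\<^sub>M M) ?Q"
    using measurable_add_dim[of m "{0..<m}" "\<lambda>_. M"] Q by simp
  have Fc: "(\<lambda>(x, y). F (x(m:=y))) \<in> borel_measurable (?P \<Otimes>\<^sub>M M)"
    using measurable_compose[OF upd Fm] by (simp add: case_prod_beta')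
  define F' where "F' x = (\<integral>y. F (x(m:=y)) \<partial>M)" for x
  have F'm: "F' \<in> borel_measurable ?P"
    unfolding F'_def by (rule M.borel_measurable_lebesgue_integral) (use Fc in simp)
  have spQ: "x(m:=y) \<in> space ?Q" if "x \<in> space ?P" "y \<in> space M" for x y
    using upd_space_ins[OF that, of m] Q by simp
  have secm: "integrable M (\<lambda>y. F (x(m:=y)))" if x: "x \<in> space ?P" for x
  proof -
    have a: "\<forall>k<Suc m. integrable M (\<lambda>y. F ((x(m:=y0))(k:=y)))"
      using Suc.prems(2) spQ[OF x y0] by blast
    show ?thesis using spec[OF a, of m] by simp
  qed
  have Fint_ins: "integrable (PiM (insert m {0..<m}) (\<lambda>_. M)) F" using Suc.prems(1) Q by simp
  have c: "(\<integral>x. F x \<partial>?Q) = (\<integral>x. F' x \<partial>?P)"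
    using PS.product_integral_insert[OF _ nm Fint_ins] Q by (simp add: F'_def)
  have F'i: "integrable ?P F'"
  proof (rule integrableI_bounded)
    show "F' \<in> borel_measurable ?P" by (rule F'm)
    have "(\<integral>\<^sup>+x. ennreal (norm (F' x)) \<partial>?P) \<le> (\<integral>\<^sup>+x. (\<integral>\<^sup>+y. ennreal (norm (F (x(m:=y)))) \<partial>M) \<partial>?P)"
    proof (rule nn_integral_mono)
      fix x assume "x \<in> space ?P"
      from integral_norm_bound_ennreal[OF secm[OF this]]
      show "ennreal (norm (F' x)) \<le> (\<integral>\<^sup>+y. ennreal (norm (F (x(m:=y)))) \<partial>M)"
        by (simp add: F'_def)
    qed
    also have "\<dots> = (\<integral>\<^sup>+x. ennreal (norm (F x)) \<partial>PiM (insert m {0..<m}) (\<lambda>_. M))"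
      by (rule PS.product_nn_integral_insert[symmetric]) (use Fm Q in auto)
    also have "\<dots> < \<infinity>" using Fint_ins by (simp add: integrable_iff_bounded)
    finally show "(\<integral>\<^sup>+x. ennreal (norm (F' x)) \<partial>?P) < \<infinity>" .
  qed
  have key: "integrable M (\<lambda>y. F' (x(k:=y))) \<and> (\<forall>l.
     (\<integral>\<^sup>+y. ennreal (exp (l * (F' (x(k:=y)) - (\<integral>y'. F' (x(k:=y')) \<partial>M)))) \<partial>M) \<le> ennreal (exp (l^2 * s^2/2)))"
    if x: "x \<in> space ?P" and k: "k < m" for x k
  proof -
    define \<phi> where "\<phi> z y = F ((x(m:=z))(k:=y))" for z y
    have km: "k \<noteq> m" using k by simp
    have tw: "(x(k:=y))(m:=z) = (x(m:=z))(k:=y)" for y z using km by (rule fun_upd_twist)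
    have xm: "x(m:=z) \<in> space ?Q" if "z \<in> space M" for z using spQ[OF x that] .
    have xk: "x(k:=y) \<in> space ?P" if "y \<in> space M" for y
      using upd_space_in[of k "{0..<m}" x M y] k x that by simp
    have a: "(\<lambda>w. x(m := fst w)) \<in> measurable (M \<Otimes>\<^sub>M M) ?Q"
      by (rule measurable_fun_upd[where J="{0..<m}"]) (use x in auto)
    have map: "(\<lambda>w. (x(m := fst w))(k := snd w)) \<in> measurable (M \<Otimes>\<^sub>M M) ?Q"
      by (rule measurable_fun_upd[where J="{0..<Suc m}"]) (use a k in auto)
    have \<phi>m: "(\<lambda>(z, y). \<phi> z y) \<in> borel_measurable (M \<Otimes>\<^sub>M M)"
      using measurable_compose[OF map Fm] by (simp add: \<phi>_def case_prod_beta')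
    have i1: "\<forall>y\<in>space M. integrable M (\<lambda>z. \<phi> z y)"
      using secm[OF xk] by (simp add: \<phi>_def tw)
    have kS: "k < Suc m" using k by simp
    have i2: "\<forall>z\<in>space M. integrable M (\<lambda>y. \<phi> z y)"
      unfolding \<phi>_def using Suc.prems(2)[rule_format, OF xm kS] by blast
    have Cb: "\<forall>z\<in>space M. (\<integral>\<^sup>+y. ennreal \<bar>\<phi> z y - (\<integral>y'. \<phi> z y' \<partial>M)\<bar> \<partial>M) \<le> ennreal (2 * exp (s^2/2))"
    proof
      fix z assume z: "z \<in> space M"
      have h1: "(\<integral>\<^sup>+y. ennreal (exp (1 * (\<phi> z y - (\<integral>y'. \<phi> z y' \<partial>M)))) \<partial>M) \<le> ennreal (exp (1^2 * s^2/2))"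
        using Suc.prems(3)[rule_format, OF xm[OF z] kS, of 1] by (simp add: \<phi>_def)
      have h2: "(\<integral>\<^sup>+y. ennreal (exp ((-1) * (\<phi> z y - (\<integral>y'. \<phi> z y' \<partial>M)))) \<partial>M) \<le> ennreal (exp ((-1)^2 * s^2/2))"
        using Suc.prems(3)[rule_format, OF xm[OF z] kS, of "-1"] by (simp add: \<phi>_def)
      show "(\<integral>\<^sup>+y. ennreal \<bar>\<phi> z y - (\<integral>y'. \<phi> z y' \<partial>M)\<bar> \<partial>M) \<le> ennreal (2 * exp (s^2/2))"
        by (rule abs_nn_bound) (use i2 z h1 h2 in auto)
    qed
    have \<phi>i: "integrable (M \<Otimes>\<^sub>M M) (\<lambda>(z, y). \<phi> z y)"
      by (rule sec_integrable[OF M \<phi>m i1 i2 Cb])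
    define mk where "mk z = (\<integral>y. \<phi> z y \<partial>M)" for z
    have mki: "integrable M mk"
      using MM.integrable_fst'[OF \<phi>i] by (simp add: mk_def[abs_def])
    have F'eq: "F' (x(k:=y)) = (\<integral>z. \<phi> z y \<partial>M)" for y
      by (simp add: F'_def \<phi>_def tw)
    have ia: "integrable M (\<lambda>y. F' (x(k:=y)))"
      using MM.integrable_snd[OF \<phi>i] by (simp add: F'eq)
    have ib: "(\<integral>y'. F' (x(k:=y')) \<partial>M) = (\<integral>z. mk z \<partial>M)"
      using MM.Fubini_integral[OF \<phi>i] by (simp add: F'eq mk_def)
    have ic: "F' (x(k:=y)) - (\<integral>y'. F' (x(k:=y')) \<partial>M) = (\<integral>z. (\<phi> z y - mk z) \<partial>M)"
      if y: "y \<in> space M" for y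
      unfolding ib F'eq[of y] using Bochner_Integration.integral_diff[OF bspec[OF i1 y] mki] by simp
    have "(\<integral>\<^sup>+y. ennreal (exp (l * (F' (x(k:=y)) - (\<integral>y'. F' (x(k:=y')) \<partial>M)))) \<partial>M) \<le> ennreal (exp (l^2 * s^2/2))"
      for l
    proof -
      have "(\<integral>\<^sup>+y. ennreal (exp (l * (F' (x(k:=y)) - (\<integral>y'. F' (x(k:=y')) \<partial>M)))) \<partial>M)
          = (\<integral>\<^sup>+y. ennreal (exp (\<integral>z. l * (\<phi> z y - mk z) \<partial>M)) \<partial>M)"
        by (rule nn_integral_cong) (simp add: ic)
      also have "\<dots> \<le> (\<integral>\<^sup>+y. (\<integral>\<^sup>+z. ennreal (exp (l * (\<phi> z y - mk z))) \<partial>M) \<partial>M)"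
      proof (rule nn_integral_mono)
        fix y assume y: "y \<in> space M"
        have "integrable M (\<lambda>z. l * (\<phi> z y - mk z))"
          using bspec[OF i1 y] mki by auto
        then show "ennreal (exp (\<integral>z. l * (\<phi> z y - mk z) \<partial>M)) \<le> (\<integral>\<^sup>+z. ennreal (exp (l * (\<phi> z y - mk z))) \<partial>M)"
          by (rule jensen_exp[OF M])
      qed
      also have "\<dots> = (\<integral>\<^sup>+z. (\<integral>\<^sup>+y. ennreal (exp (l * (\<phi> z y - mk z))) \<partial>M) \<partial>M)"
      proof (rule MM.Fubini')
        have "mk \<in> borel_measurable M" using mki by auto
        then show "(\<lambda>(z, y). ennreal (exp (l * (\<phi> z y - mk z)))) \<in> borel_measurable (M \<Otimes>\<^sub>M M)"
          using \<phi>m by measurable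
      qed
      also have "\<dots> \<le> (\<integral>\<^sup>+z. ennreal (exp (l^2 * s^2/2)) \<partial>M)"
      proof (rule nn_integral_mono)
        fix z assume z: "z \<in> space M"
        show "(\<integral>\<^sup>+y. ennreal (exp (l * (\<phi> z y - mk z))) \<partial>M) \<le> ennreal (exp (l^2 * s^2/2))"
          using Suc.prems(3)[rule_format, OF xm[OF z] kS, of l] by (simp add: \<phi>_def mk_def)
      qed
      also have "\<dots> = ennreal (exp (l^2 * s^2/2))" by (simp add: M.emeasure_space_1)
      finally show ?thesis .
    qed
    with ia show ?thesis by blast
  qed
  have IH: "(\<integral>\<^sup>+x. ennreal (exp (l * (F' x - (\<integral>x. F' x \<partial>?P)))) \<partial>?P) \<le> ennreal (exp (real m * l^2 * s^2/2))"
    by (rule Suc.IH[OF F'i]) (use key in blast)+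
  let ?c = "\<integral>x. F' x \<partial>?P"
  have "(\<integral>\<^sup>+w. ennreal (exp (l * (F w - (\<integral>x. F x \<partial>?Q)))) \<partial>?Q)
      = (\<integral>\<^sup>+w. ennreal (exp (l * (F w - ?c))) \<partial>PiM (insert m {0..<m}) (\<lambda>_. M))"
    by (simp only: c, simp only: Q)
  also have "\<dots> = (\<integral>\<^sup>+x. (\<integral>\<^sup>+y. ennreal (exp (l * (F (x(m:=y)) - ?c))) \<partial>M) \<partial>?P)"
    by (rule PS.product_nn_integral_insert) (use Fm Q in auto)
  also have "\<dots> \<le> (\<integral>\<^sup>+x. ennreal (exp (l * (F' x - ?c))) * ennreal (exp (l^2 * s^2/2)) \<partial>?P)"
  proof (rule nn_integral_mono)
    fix x assume x: "x \<in> space ?P"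
    have sm: "(\<lambda>y. F (x(m:=y))) \<in> borel_measurable M" using secm[OF x] by auto
    have "(\<integral>\<^sup>+y. ennreal (exp (l * (F (x(m:=y)) - ?c))) \<partial>M)
        = (\<integral>\<^sup>+y. ennreal (exp (l * (F' x - ?c))) * ennreal (exp (l * (F (x(m:=y)) - F' x))) \<partial>M)"
      by (rule nn_integral_cong) (simp add: ennreal_mult[symmetric] exp_add[symmetric] algebra_simps del: ennreal_mult)
    also have "\<dots> = ennreal (exp (l * (F' x - ?c))) * (\<integral>\<^sup>+y. ennreal (exp (l * (F (x(m:=y)) - F' x))) \<partial>M)"
      by (rule nn_integral_cmult) (use sm in measurable)
    also have "\<dots> \<le> ennreal (exp (l * (F' x - ?c))) * ennreal (exp (l^2 * s^2/2))"
    proof (rule mult_left_mono)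
      have a: "\<forall>k<Suc m. (\<integral>\<^sup>+y. ennreal (exp (l * (F ((x(m:=y0))(k:=y)) - (\<integral>y'. F ((x(m:=y0))(k:=y')) \<partial>M)))) \<partial>M)
          \<le> ennreal (exp (l^2 * s^2/2))"
        using Suc.prems(3) spQ[OF x y0] by blast
      show "(\<integral>\<^sup>+y. ennreal (exp (l * (F (x(m:=y)) - F' x))) \<partial>M) \<le> ennreal (exp (l^2 * s^2/2))"
        using spec[OF a, of m] by (simp add: F'_def)
    qed simp
    finally show "(\<integral>\<^sup>+y. ennreal (exp (l * (F (x(m:=y)) - ?c))) \<partial>M) \<le> ennreal (exp (l * (F' x - ?c))) * ennreal (exp (l^2 * s^2/2))" .
  qed
  also have "\<dots> = (\<integral>\<^sup>+x. ennreal (exp (l * (F' x - ?c))) \<partial>?P) * ennreal (exp (l^2 * s^2/2))"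
    by (rule nn_integral_multc) (use F'm in measurable)
  also have "\<dots> \<le> ennreal (exp (real m * l^2 * s^2/2)) * ennreal (exp (l^2 * s^2/2))"
    by (rule mult_right_mono) (use IH in auto)
  also have "\<dots> = ennreal (exp (real (Suc m) * l^2 * s^2/2))"
    by (simp add: ennreal_mult[symmetric] exp_add[symmetric] algebra_simps del: ennreal_mult)
  finally show ?case .
qed

lemma recip_pt:
  fixes v Y :: real assumes "v > 0" "Y > 0"
  shows "2 / Y - v / Y^2 \<le> 1 / v"
proof -
  have "1 / v - (2 / Y - v / Y^2) = (v - Y)^2 / (v * Y^2)"
    using assms by (simp add: field_simps power2_eq_square)
  also have "\<dots> \<ge> 0" using assms by simp
  finally show ?thesis by simp
qed

lemma recip_bound:
  fixes f :: "'b \<Rightarrow> real"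
  assumes N: "prob_space N" and fi: "integrable N f" and pos: "\<forall>x\<in>space N. f x > 0"
    and Y: "(\<integral>x. f x \<partial>N) > 0"
  shows "ennreal (1 / (\<integral>x. f x \<partial>N)) \<le> (\<integral>\<^sup>+x. ennreal (1 / f x) \<partial>N)"
proof (cases "integrable N (\<lambda>x. 1 / f x)")
  case True
  interpret N: prob_space N by fact
  define Yv where "Yv = (\<integral>x. f x \<partial>N)"
  have Yp: "Yv > 0" using Y by (simp add: Yv_def)
  have "(\<integral>x. (2 / Yv - f x / Yv^2) \<partial>N) = 2 / Yv - Yv / Yv^2"
    using fi by (simp add: Yv_def N.prob_space)
  also have "\<dots> = 1 / Yv" using Yp by (simp add: field_simps power2_eq_square)
  finally have e: "1 / Yv = (\<integral>x. (2 / Yv - f x / Yv^2) \<partial>N)" by simp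
  have "1 / Yv \<le> (\<integral>x. 1 / f x \<partial>N)"
    unfolding e
    by (rule integral_mono) (use fi True pos Yp recip_pt in auto)
  then have "ennreal (1 / Yv) \<le> ennreal (\<integral>x. 1 / f x \<partial>N)" by (rule ennreal_leI)
  also have "\<dots> = (\<integral>\<^sup>+x. ennreal (1 / f x) \<partial>N)"
    by (rule nn_integral_eq_integral[symmetric]) (use True pos in \<open>auto intro!: AE_I2 less_imp_le\<close>)
  finally show ?thesis by (simp add: Yv_def)
next
  case False
  have m: "(\<lambda>x. 1 / f x) \<in> borel_measurable N" using fi by auto
  have "(\<integral>\<^sup>+x. ennreal (1 / f x) \<partial>N) = \<infinity>"
  proof (rule ccontr)
    assume "(\<integral>\<^sup>+x. ennreal (1 / f x) \<partial>N) \<noteq> \<infinity>"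
    then have "(\<integral>\<^sup>+x. ennreal (norm (1 / f x)) \<partial>N) < \<infinity>"
    proof -
      have "(\<integral>\<^sup>+x. ennreal (norm (1 / f x)) \<partial>N) = (\<integral>\<^sup>+x. ennreal (1 / f x) \<partial>N)"
        by (rule nn_integral_cong) (use pos in auto)
      then show ?thesis using \<open>_ \<noteq> \<infinity>\<close> by (simp add: less_top)
    qed
    then have "integrable N (\<lambda>x. 1 / f x)"
      using m by (intro integrableI_bounded) auto
    with False show False by simp
  qed
  then show ?thesis by simp
qed

lemma amgm_pt:
  fixes a b c \<eta> :: real
  assumes "0 \<le> a" "a \<le> 1" "0 \<le> b" "0 \<le> c" "\<eta> > 0"
  shows "b * a * c \<le> a / (2 * \<eta>) + \<eta> / 4 * b^4 + \<eta> / 4 * c^4"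
proof -
  have bc: "b * c \<le> (b^2 + c^2) / 2"
  proof -
    have "0 \<le> (b - c)^2" by simp
    then show ?thesis by (simp add: power2_eq_square algebra_simps)
  qed
  have sq: "a * x \<le> a / (2 * \<eta>) + \<eta> / 2 * x^2" if "x \<ge> 0" for x
  proof -
    have "0 \<le> (a - \<eta> * x)^2" by simp
    then have "2 * \<eta> * (a * x) \<le> a^2 + \<eta>^2 * x^2" by (simp add: power2_eq_square algebra_simps)
    also have "\<dots> \<le> a + \<eta>^2 * x^2" using assms by (simp add: power2_eq_square mult_le_one mult_left_le)
    finally have "2 * \<eta> * (a * x) \<le> a + \<eta>^2 * x^2" .
    then show ?thesis using assms by (simp add: field_simps power2_eq_square)
  qed
  have "b * a * c = a * (b * c)" by simp
  also have "\<dots> \<le> a * ((b^2 + c^2) / 2)" using bc assms by (intro mult_left_mono) auto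
  also have "\<dots> = (a * b^2) / 2 + (a * c^2) / 2" by (simp add: algebra_simps)
  also have "\<dots> \<le> (a / (2 * \<eta>) + \<eta> / 2 * (b^2)^2) / 2 + (a / (2 * \<eta>) + \<eta> / 2 * (c^2)^2) / 2"
  proof -
    have sb: "a * b^2 \<le> a / (2 * \<eta>) + \<eta> / 2 * (b^2)^2" using sq[of "b^2"] by simp
    have sc: "a * c^2 \<le> a / (2 * \<eta>) + \<eta> / 2 * (c^2)^2" using sq[of "c^2"] by simp
    show ?thesis using add_mono[OF divide_right_mono[OF sb, of 2] divide_right_mono[OF sc, of 2]] by simp
  qed
  also have "\<dots> = a / (2 * \<eta>) + \<eta> / 4 * b^4 + \<eta> / 4 * c^4"
    by (simp add: field_simps power2_eq_square power4_eq_xxxx)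
  finally show ?thesis .
qed

lemma amgm_int:
  fixes a b c :: "'b \<Rightarrow> real" and \<eta> :: real
  assumes N: "prob_space N" and am: "a \<in> borel_measurable N" and bm: "b \<in> borel_measurable N"
    and cm: "c \<in> borel_measurable N"
    and a01: "\<forall>h\<in>space N. 0 \<le> a h \<and> a h \<le> 1" and b0: "\<forall>h\<in>space N. 0 \<le> b h"
    and c0: "\<forall>h\<in>space N. 0 \<le> c h" and \<eta>: "\<eta> > 0"
  shows "(\<integral>\<^sup>+h. ennreal (b h * a h) \<partial>N) * (\<integral>\<^sup>+h. ennreal (c h) \<partial>N)
    \<le> ennreal (1/(2*\<eta>)) * (\<integral>\<^sup>+h. ennreal (a h) \<partial>N) + ennreal (\<eta>/4) * (\<integral>\<^sup>+h. ennreal (b h ^ 4) \<partial>N)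
       + ennreal (\<eta>/4) * (\<integral>\<^sup>+h. ennreal (c h ^ 4) \<partial>N)"
proof -
  interpret N: prob_space N by fact
  let ?K = "ennreal (\<eta>/4) * (\<integral>\<^sup>+h. ennreal (c h ^ 4) \<partial>N)"
  have "(\<integral>\<^sup>+h. ennreal (b h * a h) \<partial>N) * (\<integral>\<^sup>+h. ennreal (c h) \<partial>N)
      = (\<integral>\<^sup>+h. ennreal (b h * a h) * (\<integral>\<^sup>+h'. ennreal (c h') \<partial>N) \<partial>N)"
    by (rule nn_integral_multc[symmetric]) (use am bm in measurable)
  also have "\<dots> = (\<integral>\<^sup>+h. (\<integral>\<^sup>+h'. ennreal (b h * a h) * ennreal (c h') \<partial>N) \<partial>N)"
    by (rule nn_integral_cong) (rule nn_integral_cmult[symmetric], use cm in measurable)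
  also have "\<dots> \<le> (\<integral>\<^sup>+h. (\<integral>\<^sup>+h'. (ennreal (1/(2*\<eta>)) * ennreal (a h) + ennreal (\<eta>/4) * ennreal (b h ^ 4))
        + ennreal (\<eta>/4) * ennreal (c h' ^ 4) \<partial>N) \<partial>N)"
  proof (intro nn_integral_mono)
    fix h h' assume h: "h \<in> space N" and h': "h' \<in> space N"
    have r: "b h * a h * c h' \<le> a h / (2 * \<eta>) + \<eta> / 4 * b h ^ 4 + \<eta> / 4 * c h' ^ 4"
      by (rule amgm_pt) (use a01 b0 c0 h h' \<eta> in auto)
    have "ennreal (b h * a h) * ennreal (c h') = ennreal (b h * a h * c h')"
      using a01 b0 c0 h h' by (simp add: ennreal_mult)
    also have "\<dots> \<le> ennreal (a h / (2 * \<eta>) + \<eta> / 4 * b h ^ 4 + \<eta> / 4 * c h' ^ 4)"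
      using r by (rule ennreal_leI)
    also have "\<dots> = ennreal (1/(2*\<eta>)) * ennreal (a h) + ennreal (\<eta>/4) * ennreal (b h ^ 4)
        + ennreal (\<eta>/4) * ennreal (c h' ^ 4)"
      using a01 b0 c0 h h' \<eta> by (simp add: ennreal_mult[symmetric] ennreal_plus[symmetric] del: ennreal_plus)
    finally show "ennreal (b h * a h) * ennreal (c h') \<le> ennreal (1/(2*\<eta>)) * ennreal (a h) + ennreal (\<eta>/4) * ennreal (b h ^ 4)
        + ennreal (\<eta>/4) * ennreal (c h' ^ 4)" .
  qed
  also have "\<dots> = (\<integral>\<^sup>+h. (ennreal (1/(2*\<eta>)) * ennreal (a h) + ennreal (\<eta>/4) * ennreal (b h ^ 4)) + ?K \<partial>N)"
  proof (rule nn_integral_cong)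
    fix h assume h: "h \<in> space N"
    show "(\<integral>\<^sup>+h'. (ennreal (1/(2*\<eta>)) * ennreal (a h) + ennreal (\<eta>/4) * ennreal (b h ^ 4))
        + ennreal (\<eta>/4) * ennreal (c h' ^ 4) \<partial>N) = (ennreal (1/(2*\<eta>)) * ennreal (a h) + ennreal (\<eta>/4) * ennreal (b h ^ 4)) + ?K"
      using cm by (subst nn_integral_add) (auto simp: N.emeasure_space_1 nn_integral_cmult)
  qed
  also have "\<dots> = ennreal (1/(2*\<eta>)) * (\<integral>\<^sup>+h. ennreal (a h) \<partial>N) + ennreal (\<eta>/4) * (\<integral>\<^sup>+h. ennreal (b h ^ 4) \<partial>N) + ?K"
    using am bm by (simp add: nn_integral_add nn_integral_cmult N.emeasure_space_1)
  finally show ?thesis .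
qed

lemma delta_tail:
  fixes M :: "'a measure" and h :: "'a \<Rightarrow> real" and r t :: real and n :: nat
  assumes M: "prob_space M" and n: "n \<ge> 1" and hm: "h \<in> borel_measurable M"
    and r: "r > 0" and t: "t \<ge> 0"
    and sg: "\<forall>l::real. integrable M (\<lambda>y. exp (l * (h y - (\<integral>y'. h y' \<partial>M)))) \<and>
        (\<integral>y. exp (l * (h y - (\<integral>y'. h y' \<partial>M))) \<partial>M) \<le> exp (l\<^sup>2 * r\<^sup>2 / 2)"
  shows "(\<integral>\<^sup>+x. ennreal (of_bool (gen_gap M n h x > r * t)) \<partial>sample_space n M) \<le> ennreal (exp (- real n * t^2 / 2))"
proof -
  interpret M: prob_space M by fact
  interpret PS: product_prob_space "\<lambda>_. M" using M by (rule PS_interp)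
  define E where "E = (\<integral>y. h y \<partial>M)"
  define l where "l = real n * t / r"
  have l0: "l \<ge> 0" using r t by (simp add: l_def)
  have np: "real n > 0" using n by simp
  define f where "f y = exp ((l / real n) * (E - h y))" for y
  have fm: "f \<in> borel_measurable M" unfolding f_def[abs_def] using hm by measurable
  have gap: "l * (gen_gap M n h x - r * t) = - (l * r * t) + (\<Sum>i\<in>{0..<n}. (l / real n) * (E - h (x i)))" for x
  proof -
    have "(\<Sum>i\<in>{0..<n}. (l / real n) * (E - h (x i))) = l * E - (l / real n) * (\<Sum>i\<in>{0..<n}. h (x i))"
      using np by (simp add: sum_subtractf sum_distrib_left[symmetric] right_diff_distrib sum_divide_distrib[symmetric])
    then show ?thesis
      by (simp add: gen_gap_def E_def lessThan_atLeast0 algebra_simps)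
  qed
  have "(\<integral>\<^sup>+x. ennreal (of_bool (gen_gap M n h x > r * t)) \<partial>sample_space n M)
      \<le> (\<integral>\<^sup>+x. ennreal (exp (l * (gen_gap M n h x - r * t))) \<partial>sample_space n M)"
  proof (rule nn_integral_mono)
    fix x
    show "ennreal (of_bool (gen_gap M n h x > r * t)) \<le> ennreal (exp (l * (gen_gap M n h x - r * t)))"
    proof (cases "gen_gap M n h x > r * t")
      case True
      then have "l * (gen_gap M n h x - r * t) \<ge> 0" using l0 by simp
      then have "exp (l * (gen_gap M n h x - r * t)) \<ge> 1" by simp
      with True show ?thesis by simp
    qed simp
  qed
  also have "\<dots> = (\<integral>\<^sup>+x. ennreal (exp (- (l * r * t))) * (\<Prod>i\<in>{0..<n}. ennreal (f (x i))) \<partial>sample_space n M)"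
  proof (rule nn_integral_cong)
    fix x
    have eq: "exp (l * (gen_gap M n h x - r * t)) = exp (- (l * r * t)) * (\<Prod>i\<in>{0..<n}. f (x i))"
      unfolding gap exp_add by (simp add: exp_sum f_def)
    have pe: "(\<Prod>i\<in>{0..<n}. ennreal (f (x i))) = ennreal (\<Prod>i\<in>{0..<n}. f (x i))"
      by (rule prod_ennreal) (simp add: f_def)
    have p0: "0 \<le> (\<Prod>i\<in>{0..<n}. f (x i))" by (rule prod_nonneg) (simp add: f_def)
    show "ennreal (exp (l * (gen_gap M n h x - r * t))) = ennreal (exp (- (l * r * t))) * (\<Prod>i\<in>{0..<n}. ennreal (f (x i)))"
      unfolding eq pe using p0 by (simp add: ennreal_mult)
  qed
  also have "\<dots> = ennreal (exp (- (l * r * t))) * (\<integral>\<^sup>+x. (\<Prod>i\<in>{0..<n}. ennreal (f (x i))) \<partial>sample_space n M)"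
    by (rule nn_integral_cmult) (use fm in measurable)
  also have "(\<integral>\<^sup>+x. (\<Prod>i\<in>{0..<n}. ennreal (f (x i))) \<partial>sample_space n M) = (\<Prod>i\<in>{0..<n}. (\<integral>\<^sup>+y. ennreal (f y) \<partial>M))"
    by (rule PS.product_nn_integral_prod) (use fm in auto)
  also have "\<dots> = (\<integral>\<^sup>+y. ennreal (f y) \<partial>M) ^ n" by simp
  also have "\<dots> \<le> ennreal (exp ((l / real n)^2 * r^2 / 2)) ^ n"
  proof (rule power_mono)
    have sgl: "integrable M (\<lambda>y. exp ((- (l / real n)) * (h y - E))) \<and>
        (\<integral>y. exp ((- (l / real n)) * (h y - E)) \<partial>M) \<le> exp ((- (l / real n))\<^sup>2 * r\<^sup>2 / 2)"
      using sg unfolding E_def by blast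
    have "(\<integral>\<^sup>+y. ennreal (f y) \<partial>M) = (\<integral>\<^sup>+y. ennreal (exp ((- (l / real n)) * (h y - E))) \<partial>M)"
      by (rule nn_integral_cong) (metis f_def minus_diff_eq mult_minus_left mult_minus_right)
    also have "\<dots> = ennreal (\<integral>y. exp ((- (l / real n)) * (h y - E)) \<partial>M)"
      using sgl by (intro nn_integral_eq_integral) auto
    also have "\<dots> \<le> ennreal (exp ((- (l / real n))^2 * r^2 / 2))"
      using sgl by (intro ennreal_leI) auto
    finally show "(\<integral>\<^sup>+y. ennreal (f y) \<partial>M) \<le> ennreal (exp ((l / real n)^2 * r^2 / 2))"
      by simp
  qed simp
  also have "\<dots> = ennreal (exp (real n * ((l / real n)^2 * r^2 / 2)))"
    by (simp add: ennreal_power exp_of_nat_mult[symmetric])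
  also have "ennreal (exp (- (l * r * t))) * \<dots> = ennreal (exp (- real n * t^2 / 2))"
  proof -
    have "- (l * r * t) + real n * ((l / real n)^2 * r^2 / 2) = - real n * t^2 / 2"
      using np r by (simp add: l_def field_simps power2_eq_square)
    then show ?thesis by (simp add: ennreal_mult[symmetric] exp_add[symmetric] del: ennreal_mult)
  qed
  finally show ?thesis by (simp add: mult_left_mono)
qed



theorem theorem8:
  fixes M :: "'a measure" and Pr :: "('a \<Rightarrow> real) measure"
    and n :: nat and Q :: "(nat \<Rightarrow> 'a) \<Rightarrow> ('a \<Rightarrow> real) measure"
    and H :: "('a \<Rightarrow> real) \<Rightarrow> (nat \<Rightarrow> 'a) \<Rightarrow> real"
    and \<rho> :: "('a \<Rightarrow> real) \<Rightarrow> real" and \<sigma> \<delta> :: real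
  assumes M: "prob_space M"
    and n: "n \<ge> 1"
    and hyp_meas: "\<forall>h\<in>space Pr. h \<in> borel_measurable M \<and> (\<forall>y\<in>space M. h y \<ge> 0)"
    and eval_meas: "(\<lambda>(h, y). h y) \<in> borel_measurable (Pr \<Otimes>\<^sub>M M)"
    and Q_ac: "abs_cont_alg Pr (sample_space n M) Q"
    and Q_H: "is_hamiltonian Pr (sample_space n M) Q H"
    and expH_int: "integrable Pr (\<lambda>h. exp (\<integral>x. H h x \<partial>sample_space n M))"
    and expH_pos: "(\<integral>h. exp (\<integral>x. H h x \<partial>sample_space n M) \<partial>Pr) > 0"
    and H_int: "\<forall>h\<in>space Pr. integrable (sample_space n M) (H h)"
    and \<rho>_meas: "\<rho> \<in> borel_measurable Pr"
    and h_int: "\<forall>h\<in>space Pr. integrable M h"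
    and h_subg: "\<forall>h\<in>space Pr. \<rho> h > 0 \<and> (\<forall>l::real.
        integrable M (\<lambda>y. exp (l * (h y - (\<integral>y'. h y' \<partial>M)))) \<and>
        (\<integral>y. exp (l * (h y - (\<integral>y'. h y' \<partial>M))) \<partial>M) \<le> exp (l\<^sup>2 * (\<rho> h)\<^sup>2 / 2))"
    and \<sigma>_pos: "\<sigma> > 0"
    and H_int_k: "\<forall>h\<in>space Pr. \<forall>x\<in>space (sample_space n M). \<forall>k\<in>{0..<n}.
        integrable M (\<lambda>y. H h (x(k := y)))"
    and H_subg: "\<forall>l::real. \<forall>k\<in>{0..<n}. \<forall>h\<in>space Pr. \<forall>x\<in>space (sample_space n M).
        integrable M (\<lambda>y. exp (l * (H h (x(k := y)) - (\<integral>y'. H h (x(k := y')) \<partial>M)))) \<and>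
        (\<integral>y. exp (l * (H h (x(k := y)) - (\<integral>y'. H h (x(k := y')) \<partial>M))) \<partial>M)
          \<le> exp (l\<^sup>2 * \<sigma>\<^sup>2 / 2)"
    and \<delta>: "\<delta> > 0"
  shows "(\<integral>\<^sup>+x. emeasure (Q x) {h \<in> space Pr.
            gen_gap M n h x \<le> \<rho> h * (sqrt 32 * \<sigma> + sqrt (4 * ln (1 / \<delta>) / real n))}
          \<partial>sample_space n M) \<ge> ennreal (1 - \<delta>)"
proof (cases "\<delta> \<ge> 1")
  case True
  then show ?thesis by (simp add: ennreal_neg)
next
  case False
  then have \<delta>1: "\<delta> < 1" by simp
  interpret M: prob_space M by fact
  define XS where "XS = sample_space n M"
  interpret X: prob_space XS unfolding XS_def by (intro prob_space_PiM) (use M in auto)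
  define t where "t = sqrt 32 * \<sigma> + sqrt (4 * ln (1 / \<delta>) / real n)"
  define EH where "EH h = (\<integral>x. H h x \<partial>XS)" for h
  define Zb where "Zb = (\<integral>h. exp (EH h) \<partial>Pr)"
  define w where "w h = exp (EH h) / Zb" for h
  define pib where "pib = density Pr (\<lambda>h. ennreal (w h))"
  define G where "G h x = H h x - EH h" for h x
  have Hm: "(\<lambda>(h, x). H h x) \<in> borel_measurable (Pr \<Otimes>\<^sub>M XS)"
    using Q_H unfolding is_hamiltonian_def XS_def by blast
  have RH: "(\<lambda>p. H (f p) (g p)) \<in> borel_measurable N" if "f \<in> measurable N Pr" "g \<in> measurable N XS" for f g and N :: "'c measure"
    using measurable_compose[OF measurable_Pair[OF that] Hm] by simp
  have EHm: "EH \<in> borel_measurable Pr"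
    unfolding EH_def by (rule X.borel_measurable_lebesgue_integral) (use Hm in simp)
  have Zbp: "Zb > 0" using expH_pos by (simp add: Zb_def EH_def XS_def)
  have wm: "w \<in> borel_measurable Pr" unfolding w_def[abs_def] using EHm by measurable
  have w0: "w h \<ge> 0" for h using Zbp by (simp add: w_def)
  have sets_pib[measurable_cong]: "sets pib = sets Pr" by (simp add: pib_def)
  have space_pib: "space pib = space Pr" by (simp add: pib_def)
  have pib: "prob_space pib"
  proof (rule prob_spaceI)
    have "emeasure pib (space pib) = emeasure pib (space Pr)" by (simp only: space_pib)
    also have "\<dots> = (\<integral>\<^sup>+h. ennreal (w h) * indicator (space Pr) h \<partial>Pr)"
      unfolding pib_def by (rule emeasure_density) (use wm in auto)
    also have "\<dots> = (\<integral>\<^sup>+h. ennreal (w h) \<partial>Pr)"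
      by (rule nn_integral_cong) simp
    also have "\<dots> = ennreal (\<integral>h. w h \<partial>Pr)"
      by (rule nn_integral_eq_integral) (use expH_int w0 in \<open>auto simp: w_def EH_def XS_def\<close>)
    also have "(\<integral>h. w h \<partial>Pr) = 1"
      using Zbp by (simp add: w_def Zb_def)
    finally show "emeasure pib (space pib) = 1" by simp
  qed
  interpret P: prob_space pib by (rule pib)
  have intm: "(\<lambda>h. \<integral>y. h y \<partial>M) \<in> borel_measurable Pr"
    by (rule M.borel_measurable_lebesgue_integral) (use eval_meas in simp)
  have Rev: "(\<lambda>p. f p (g p i)) \<in> borel_measurable N"
    if f: "f \<in> measurable N Pr" and g: "g \<in> measurable N XS" and i: "i < n" for f g i and N :: "'c measure"
  proof -
    have "(\<lambda>p. g p i) \<in> measurable N M"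
    proof -
      have iI: "i \<in> {0..<n}" using i by simp
      show ?thesis using measurable_compose[OF g[unfolded XS_def] measurable_component_singleton[OF iI]] by simp
    qed
    then have "(\<lambda>p. (f p, g p i)) \<in> measurable N (Pr \<Otimes>\<^sub>M M)" by (rule measurable_Pair[OF f])
    from measurable_compose[OF this eval_meas] show ?thesis by simp
  qed
  have Rgap: "(\<lambda>p. gen_gap M n (f p) (g p)) \<in> borel_measurable N"
    if f: "f \<in> measurable N Pr" and g: "g \<in> measurable N XS" for f g and N :: "'c measure"
  proof -
    have a: "(\<lambda>p. \<integral>y. f p y \<partial>M) \<in> borel_measurable N" using measurable_compose[OF f intm] by simp
    have b: "(\<lambda>p. \<Sum>i<n. f p (g p i)) \<in> borel_measurable N"
      by (rule borel_measurable_sum) (use Rev f g in auto)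
    show ?thesis unfolding gen_gap_def
      by (intro borel_measurable_diff borel_measurable_divide a b borel_measurable_const)
  qed
  define a where "a h x = (if \<rho> h * t < gen_gap M n h x then 1 else 0 :: real)" for h x
  have Ra: "(\<lambda>p. a (f p) (g p)) \<in> borel_measurable N"
    if f: "f \<in> measurable N Pr" and g: "g \<in> measurable N XS" for f g and N :: "'c measure"
  proof -
    note [measurable] = Rgap[OF f g] measurable_compose[OF f \<rho>_meas]
    show ?thesis unfolding a_def by measurable
  qed
  have RG: "(\<lambda>p. G (f p) (g p)) \<in> borel_measurable N"
    if f: "f \<in> measurable N Pr" and g: "g \<in> measurable N XS" for f g and N :: "'c measure"
    unfolding G_def using RH[OF f g] measurable_compose[OF f EHm] by measurable
  have a01: "0 \<le> a h x \<and> a h x \<le> 1" for h x by (simp add: a_def)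
  define bad where "bad x = {h \<in> space Pr. \<rho> h * t < gen_gap M n h x}" for x
  have bad_sets: "bad x \<in> sets Pr" if x: "x \<in> space XS" for x
  proof -
    have "(\<lambda>h. gen_gap M n h x) \<in> borel_measurable Pr"
      using Rgap[OF measurable_ident_sets[OF refl] measurable_const[OF x]] by simp
    then show ?thesis unfolding bad_def using \<rho>_meas by measurable
  qed
  have ind_a: "indicator (bad x) h = ennreal (a h x)" if "h \<in> space Pr" for h x
    using that by (simp add: bad_def a_def indicator_def)
  define u where "u x = (\<integral>\<^sup>+h. ennreal (exp (G h x) * a h x) \<partial>pib) * (\<integral>\<^sup>+h. ennreal (exp (- G h x)) \<partial>pib)" for x
  have claim1: "emeasure (Q x) (bad x) \<le> u x" if x: "x \<in> space XS" for x
  proof -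
    have Zx: "integrable Pr (\<lambda>h. exp (H h x)) \<and> partition_fun Pr H x > 0 \<and>
      Q x = density Pr (\<lambda>h. ennreal (exp (H h x) / partition_fun Pr H x))"
      using Q_H x unfolding is_hamiltonian_def XS_def by blast
    define Z where "Z = partition_fun Pr H x"
    have Zp: "Z > 0" and Zi: "integrable Pr (\<lambda>h. exp (H h x))"
      and Qx: "Q x = density Pr (\<lambda>h. ennreal (exp (H h x) / Z))" using Zx by (auto simp: Z_def)
    define Yx where "Yx = Z / Zb"
    have Yp: "Yx > 0" using Zp Zbp by (simp add: Yx_def)
    have Hx: "(\<lambda>h. H h x) \<in> borel_measurable Pr"
      using RH[OF measurable_ident_sets[OF refl] measurable_const[OF x]] by simp
    have Gx: "(\<lambda>h. G h x) \<in> borel_measurable Pr"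
      using RG[OF measurable_ident_sets[OF refl] measurable_const[OF x]] by simp
    have ax: "(\<lambda>h. a h x) \<in> borel_measurable Pr"
      using Ra[OF measurable_ident_sets[OF refl] measurable_const[OF x]] by simp
    have eqw: "exp (H h x) / Z = w h * (exp (G h x) / Yx)" for h
      using Zp Zbp by (simp add: w_def G_def Yx_def exp_diff field_simps)
    have "emeasure (Q x) (bad x) = (\<integral>\<^sup>+h. ennreal (exp (H h x) / Z) * indicator (bad x) h \<partial>Pr)"
      unfolding Qx by (rule emeasure_density) (use Hx bad_sets[OF x] in auto)
    also have "\<dots> = (\<integral>\<^sup>+h. ennreal (w h) * (ennreal (exp (G h x) / Yx) * indicator (bad x) h) \<partial>Pr)"
    proof (rule nn_integral_cong)
      fix h
      have "ennreal (w h * (exp (G h x) / Yx)) = ennreal (w h) * ennreal (exp (G h x) / Yx)"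
        by (rule ennreal_mult) (use w0 Yp in auto)
      then show "ennreal (exp (H h x) / Z) * indicator (bad x) h = ennreal (w h) * (ennreal (exp (G h x) / Yx) * indicator (bad x) h)"
        by (simp only: eqw mult.assoc)
    qed
    also have "\<dots> = (\<integral>\<^sup>+h. ennreal (exp (G h x) / Yx) * indicator (bad x) h \<partial>pib)"
      unfolding pib_def by (rule nn_integral_density[symmetric]) (use wm Gx bad_sets[OF x] in auto)
    also have "\<dots> = (\<integral>\<^sup>+h. ennreal (1 / Yx) * ennreal (exp (G h x) * a h x) \<partial>pib)"
    proof (rule nn_integral_cong)
      fix h assume "h \<in> space pib"
      then have h: "h \<in> space Pr" by (simp add: space_pib)
      have "ennreal (exp (G h x) / Yx) * ennreal (a h x) = ennreal (exp (G h x) / Yx * a h x)"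
        by (rule ennreal_mult[symmetric]) (use Yp a01 in auto)
      also have "\<dots> = ennreal (1 / Yx * (exp (G h x) * a h x))" by simp
      also have "\<dots> = ennreal (1 / Yx) * ennreal (exp (G h x) * a h x)"
        by (rule ennreal_mult) (use Yp a01 in auto)
      finally show "ennreal (exp (G h x) / Yx) * indicator (bad x) h = ennreal (1 / Yx) * ennreal (exp (G h x) * a h x)"
        unfolding ind_a[OF h] .
    qed
    also have "\<dots> = ennreal (1 / Yx) * (\<integral>\<^sup>+h. ennreal (exp (G h x) * a h x) \<partial>pib)"
      by (rule nn_integral_cmult) (use Gx ax in measurable)
    also have "\<dots> \<le> (\<integral>\<^sup>+h. ennreal (exp (- G h x)) \<partial>pib) * (\<integral>\<^sup>+h. ennreal (exp (G h x) * a h x) \<partial>pib)"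
    proof (rule mult_right_mono)
      have Gint: "integrable pib (\<lambda>h. exp (G h x))"
      proof -
        have "integrable Pr (\<lambda>h. w h *\<^sub>R exp (G h x))"
        proof -
          have "integrable Pr (\<lambda>h. exp (H h x) / Z * Z / Zb)" using Zi Zp by simp
          moreover have "exp (H h x) / Z * Z / Zb = w h *\<^sub>R exp (G h x)" for h
            using Zp Zbp eqw[of h] by (simp add: Yx_def field_simps)
          ultimately show ?thesis by simp
        qed
        then show ?thesis unfolding pib_def using Gx wm w0 by (subst integrable_density) auto
      qed
      have Yeq: "(\<integral>h. exp (G h x) \<partial>pib) = Yx"
      proof -
        have "(\<integral>h. exp (G h x) \<partial>pib) = (\<integral>h. w h *\<^sub>R exp (G h x) \<partial>Pr)"
          unfolding pib_def by (rule integral_density) (use Gx wm w0 in auto)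
        also have "\<dots> = (\<integral>h. exp (H h x) / Zb \<partial>Pr)"
          by (rule Bochner_Integration.integral_cong) (simp_all add: w_def G_def exp_diff)
        also have "\<dots> = Yx" by (simp add: Yx_def Z_def partition_fun_def)
        finally show ?thesis .
      qed
      have "ennreal (1 / (\<integral>h. exp (G h x) \<partial>pib)) \<le> (\<integral>\<^sup>+h. ennreal (1 / exp (G h x)) \<partial>pib)"
        by (rule recip_bound[OF pib Gint]) (use Yeq Yp in auto)
      then show "ennreal (1 / Yx) \<le> (\<integral>\<^sup>+h. ennreal (exp (- G h x)) \<partial>pib)"
        by (simp add: Yeq exp_minus inverse_eq_divide)
    qed simp
    also have "\<dots> = u x" by (simp add: u_def mult.commute)
    finally show ?thesis .
  qed
  have Qprob: "prob_space (Q x)" and Qsets: "sets (Q x) = sets Pr" if x: "x \<in> space XS" for x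
    using Q_ac x unfolding abs_cont_alg_def XS_def by auto
  have claim2: "emeasure (Q x) {h \<in> space Pr. gen_gap M n h x \<le> \<rho> h * t} = 1 - emeasure (Q x) (bad x)"
    if x: "x \<in> space XS" for x
  proof -
    interpret Qx: prob_space "Q x" by (rule Qprob[OF x])
    have sp: "space (Q x) = space Pr" using Qsets[OF x] by (rule sets_eq_imp_space_eq)
    have "{h \<in> space Pr. gen_gap M n h x \<le> \<rho> h * t} = space (Q x) - bad x"
      by (auto simp: sp bad_def not_less)
    moreover have "bad x \<in> sets (Q x)" using bad_sets[OF x] Qsets[OF x] by simp
    ultimately show ?thesis by (simp add: emeasure_compl Qx.emeasure_space_1)
  qed
  have snd_m: "snd \<in> measurable (XS \<Otimes>\<^sub>M pib) Pr"
    using measurable_snd[of XS pib] by (simp add: measurable_cong_sets[OF refl sets_pib])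
  have fst_m: "fst \<in> measurable (XS \<Otimes>\<^sub>M pib) XS" by (rule measurable_fst)
  have fst_m': "fst \<in> measurable (pib \<Otimes>\<^sub>M XS) Pr"
    using measurable_fst[of pib XS] by (simp add: measurable_cong_sets[OF refl sets_pib])
  have snd_m': "snd \<in> measurable (pib \<Otimes>\<^sub>M XS) XS" by (rule measurable_snd)
  note [measurable] = Ra[OF snd_m fst_m] RG[OF snd_m fst_m] Ra[OF fst_m' snd_m'] RG[OF fst_m' snd_m']
  have um: "u \<in> borel_measurable XS"
  proof -
    have "(\<lambda>x. \<integral>\<^sup>+h. ennreal (exp (G h x) * a h x) \<partial>pib) \<in> borel_measurable XS"
      by (rule P.borel_measurable_nn_integral) measurable
    moreover have "(\<lambda>x. \<integral>\<^sup>+h. ennreal (exp (- G h x)) \<partial>pib) \<in> borel_measurable XS"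
      by (rule P.borel_measurable_nn_integral) measurable
    ultimately show ?thesis unfolding u_def[abs_def] by measurable
  qed
  have tensH: "(\<integral>\<^sup>+x. ennreal (exp (l * (H h x - EH h))) \<partial>XS) \<le> ennreal (exp (real n * l^2 * \<sigma>^2/2))"
    if h: "h \<in> space Pr" for h l
  proof -
    have "(\<integral>\<^sup>+x. ennreal (exp (l * (H h x - (\<integral>x. H h x \<partial>PiM {0..<n} (\<lambda>_. M))))) \<partial>PiM {0..<n} (\<lambda>_. M))
       \<le> ennreal (exp (real n * l^2 * \<sigma>^2/2))"
    proof (rule tens[OF M])
      show "integrable (PiM {0..<n} (\<lambda>_. M)) (H h)" using H_int h by blast
      show "\<forall>x\<in>space (PiM {0..<n} (\<lambda>_. M)). \<forall>k<n. integrable M (\<lambda>y. H h (x(k:=y)))"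
        using H_int_k h by auto
      show "\<forall>l. \<forall>x\<in>space (PiM {0..<n} (\<lambda>_. M)). \<forall>k<n.
        (\<integral>\<^sup>+y. ennreal (exp (l * (H h (x(k:=y)) - (\<integral>y'. H h (x(k:=y')) \<partial>M)))) \<partial>M) \<le> ennreal (exp (l^2 * \<sigma>^2/2))"
      proof (intro allI ballI impI)
        fix l x k assume x: "x \<in> space (PiM {0..<n} (\<lambda>_. M))" and k: "k < n"
        have kk: "k \<in> {0..<n}" using k by simp
        have hs: "integrable M (\<lambda>y. exp (l * (H h (x(k := y)) - (\<integral>y'. H h (x(k := y')) \<partial>M)))) \<and>
          (\<integral>y. exp (l * (H h (x(k := y)) - (\<integral>y'. H h (x(k := y')) \<partial>M))) \<partial>M) \<le> exp (l\<^sup>2 * \<sigma>\<^sup>2 / 2)"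
          using H_subg kk h x by blast
        have "(\<integral>\<^sup>+y. ennreal (exp (l * (H h (x(k:=y)) - (\<integral>y'. H h (x(k:=y')) \<partial>M)))) \<partial>M)
           = ennreal (\<integral>y. exp (l * (H h (x(k:=y)) - (\<integral>y'. H h (x(k:=y')) \<partial>M))) \<partial>M)"
          using hs by (intro nn_integral_eq_integral) auto
        also have "\<dots> \<le> ennreal (exp (l^2 * \<sigma>^2/2))" using hs by (intro ennreal_leI) auto
        finally show "(\<integral>\<^sup>+y. ennreal (exp (l * (H h (x(k:=y)) - (\<integral>y'. H h (x(k:=y')) \<partial>M)))) \<partial>M) \<le> ennreal (exp (l^2 * \<sigma>^2/2))" .
      qed
    qed
    then show ?thesis by (simp add: EH_def XS_def)
  qed
  define \<eta> where "\<eta> = exp (- real n * t^2 / 4)"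
  define Pb where "Pb = exp (- real n * t^2 / 2)"
  define Eb where "Eb = exp (8 * real n * \<sigma>^2)"
  have \<eta>p: "\<eta> > 0" by (simp add: \<eta>_def)
  have lnp: "ln (1 / \<delta>) > 0" using \<delta> \<delta>1 by simp
  have t0: "t \<ge> 0" using \<sigma>_pos lnp unfolding t_def by (intro add_nonneg_nonneg) auto
  define A1 where "A1 x = (\<integral>\<^sup>+h. ennreal (a h x) \<partial>pib)" for x
  define A2 where "A2 x = (\<integral>\<^sup>+h. ennreal (exp (G h x) ^ 4) \<partial>pib)" for x
  define A3 where "A3 x = (\<integral>\<^sup>+h. ennreal (exp (- G h x) ^ 4) \<partial>pib)" for x
  have A1m: "A1 \<in> borel_measurable XS" unfolding A1_def by (rule P.borel_measurable_nn_integral) measurable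
  have A2m: "A2 \<in> borel_measurable XS" unfolding A2_def by (rule P.borel_measurable_nn_integral) measurable
  have A3m: "A3 \<in> borel_measurable XS" unfolding A3_def by (rule P.borel_measurable_nn_integral) measurable
  have upt: "u x \<le> ennreal (1/(2*\<eta>)) * A1 x + ennreal (\<eta>/4) * A2 x + ennreal (\<eta>/4) * A3 x"
    if x: "x \<in> space XS" for x
  proof -
    have Gx: "(\<lambda>h. G h x) \<in> borel_measurable pib"
      using RG[OF measurable_ident_sets[OF sets_pib] measurable_const[OF x]] by simp
    have ax: "(\<lambda>h. a h x) \<in> borel_measurable pib"
      using Ra[OF measurable_ident_sets[OF sets_pib] measurable_const[OF x]] by simp
    show ?thesis unfolding u_def A1_def A2_def A3_def
      by (rule amgm_int[OF pib]) (use Gx ax a01 \<eta>p in auto)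
  qed
  have I1: "(\<integral>\<^sup>+x. A1 x \<partial>XS) \<le> ennreal Pb"
  proof -
    interpret PX: pair_sigma_finite pib XS by unfold_locales
    have "(\<integral>\<^sup>+x. A1 x \<partial>XS) = (\<integral>\<^sup>+h. (\<integral>\<^sup>+x. ennreal (a h x) \<partial>XS) \<partial>pib)"
      unfolding A1_def by (rule PX.Fubini') measurable
    also have "\<dots> \<le> (\<integral>\<^sup>+h. ennreal Pb \<partial>pib)"
    proof (rule nn_integral_mono)
      fix h assume "h \<in> space pib"
      then have h: "h \<in> space Pr" by (simp add: space_pib)
      have "(\<integral>\<^sup>+x. ennreal (a h x) \<partial>XS) = (\<integral>\<^sup>+x. ennreal (of_bool (gen_gap M n h x > \<rho> h * t)) \<partial>sample_space n M)"
        unfolding XS_def by (rule nn_integral_cong) (simp add: a_def)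
      also have "\<dots> \<le> ennreal Pb" unfolding Pb_def
        by (rule delta_tail[OF M n]) (use hyp_meas h_subg h t0 in auto)
      finally show "(\<integral>\<^sup>+x. ennreal (a h x) \<partial>XS) \<le> ennreal Pb" .
    qed
    also have "\<dots> = ennreal Pb" by (simp add: P.emeasure_space_1)
    finally show ?thesis .
  qed
  have I2: "(\<integral>\<^sup>+x. A2 x \<partial>XS) \<le> ennreal Eb"
  proof -
    interpret PX: pair_sigma_finite pib XS by unfold_locales
    have "(\<integral>\<^sup>+x. A2 x \<partial>XS) = (\<integral>\<^sup>+h. (\<integral>\<^sup>+x. ennreal (exp (G h x) ^ 4) \<partial>XS) \<partial>pib)"
      unfolding A2_def by (rule PX.Fubini') measurable
    also have "\<dots> \<le> (\<integral>\<^sup>+h. ennreal Eb \<partial>pib)"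
    proof (rule nn_integral_mono)
      fix h assume "h \<in> space pib"
      then have h: "h \<in> space Pr" by (simp add: space_pib)
      have "(\<integral>\<^sup>+x. ennreal (exp (G h x) ^ 4) \<partial>XS) = (\<integral>\<^sup>+x. ennreal (exp (4 * (H h x - EH h))) \<partial>XS)"
        by (simp add: G_def exp_of_nat_mult[symmetric] mult.commute)
      also have "\<dots> \<le> ennreal (exp (real n * 4^2 * \<sigma>^2/2))" by (rule tensH[OF h])
      also have "\<dots> = ennreal Eb" by (simp add: Eb_def)
      finally show "(\<integral>\<^sup>+x. ennreal (exp (G h x) ^ 4) \<partial>XS) \<le> ennreal Eb" .
    qed
    also have "\<dots> = ennreal Eb" by (simp add: P.emeasure_space_1)
    finally show ?thesis .
  qed
  have I3: "(\<integral>\<^sup>+x. A3 x \<partial>XS) \<le> ennreal Eb"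
  proof -
    interpret PX: pair_sigma_finite pib XS by unfold_locales
    have "(\<integral>\<^sup>+x. A3 x \<partial>XS) = (\<integral>\<^sup>+h. (\<integral>\<^sup>+x. ennreal (exp (- G h x) ^ 4) \<partial>XS) \<partial>pib)"
      unfolding A3_def by (rule PX.Fubini') measurable
    also have "\<dots> \<le> (\<integral>\<^sup>+h. ennreal Eb \<partial>pib)"
    proof (rule nn_integral_mono)
      fix h assume "h \<in> space pib"
      then have h: "h \<in> space Pr" by (simp add: space_pib)
      have "(\<integral>\<^sup>+x. ennreal (exp (- G h x) ^ 4) \<partial>XS) = (\<integral>\<^sup>+x. ennreal (exp ((-4) * (H h x - EH h))) \<partial>XS)"
        by (simp add: G_def exp_of_nat_mult[symmetric] mult.commute)
      also have "\<dots> \<le> ennreal (exp (real n * (-4)^2 * \<sigma>^2/2))" by (rule tensH[OF h])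
      also have "\<dots> = ennreal Eb" by (simp add: Eb_def)
      finally show "(\<integral>\<^sup>+x. ennreal (exp (- G h x) ^ 4) \<partial>XS) \<le> ennreal Eb" .
    qed
    also have "\<dots> = ennreal Eb" by (simp add: P.emeasure_space_1)
    finally show ?thesis .
  qed
  have key_real: "Pb / (2 * \<eta>) + \<eta> * Eb / 2 \<le> \<delta>"
  proof -
    have np: "real n > 0" using n by simp
    define A where "A = sqrt 32 * \<sigma>"
    define B where "B = sqrt (4 * ln (1 / \<delta>) / real n)"
    have A0: "A \<ge> 0" using \<sigma>_pos by (simp add: A_def)
    have B0: "B \<ge> 0" using lnp np by (simp add: B_def)
    have A2: "A^2 = 32 * \<sigma>^2" by (simp add: A_def power_mult_distrib)
    have B2: "B^2 = 4 * ln (1 / \<delta>) / real n" using lnp np by (simp add: B_def)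
    have "t^2 = (A + B)^2" by (simp add: t_def A_def B_def)
    also have "\<dots> \<ge> A^2 + B^2" using A0 B0 by (simp add: power2_sum)
    finally have "t^2 \<ge> 32 * \<sigma>^2 + 4 * ln (1 / \<delta>) / real n" using A2 B2 by simp
    then have "real n * t^2 \<ge> real n * (32 * \<sigma>^2 + 4 * ln (1 / \<delta>) / real n)"
      using np by (intro mult_left_mono) auto
    also have "real n * (32 * \<sigma>^2 + 4 * ln (1 / \<delta>) / real n) = 32 * real n * \<sigma>^2 + 4 * ln (1 / \<delta>)"
      using np by (simp add: field_simps)
    finally have ineq: "- real n * t^2 / 4 + 8 * real n * \<sigma>^2 \<le> - ln (1 / \<delta>)" by simp
    have "\<eta> * Eb = exp (- real n * t^2 / 4 + 8 * real n * \<sigma>^2)"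
      unfolding \<eta>_def Eb_def exp_add[symmetric] by simp
    also have "\<dots> \<le> exp (- ln (1 / \<delta>))" using ineq by simp
    also have "\<dots> = \<delta>" using \<delta> by (simp add: ln_div)
    finally have etaE: "\<eta> * Eb \<le> \<delta>" .
    have "Pb / (2 * \<eta>) = \<eta> / 2"
    proof -
      have "Pb = \<eta> * \<eta>" by (simp add: Pb_def \<eta>_def exp_add[symmetric])
      then show ?thesis using \<eta>p by simp
    qed
    moreover have "\<eta> \<le> \<eta> * Eb" using \<eta>p \<sigma>_pos n by (simp add: Eb_def)
    ultimately show ?thesis using etaE by simp
  qed
  have Iu: "(\<integral>\<^sup>+x. u x \<partial>XS) \<le> ennreal \<delta>"
  proof -
    have "(\<integral>\<^sup>+x. u x \<partial>XS) \<le> (\<integral>\<^sup>+x. ennreal (1/(2*\<eta>)) * A1 x + ennreal (\<eta>/4) * A2 x + ennreal (\<eta>/4) * A3 x \<partial>XS)"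
      by (rule nn_integral_mono) (rule upt)
    also have "\<dots> = ennreal (1/(2*\<eta>)) * (\<integral>\<^sup>+x. A1 x \<partial>XS) + ennreal (\<eta>/4) * (\<integral>\<^sup>+x. A2 x \<partial>XS)
        + ennreal (\<eta>/4) * (\<integral>\<^sup>+x. A3 x \<partial>XS)"
      using A1m A2m A3m by (simp add: nn_integral_add nn_integral_cmult)
    also have "\<dots> \<le> ennreal (1/(2*\<eta>)) * ennreal Pb + ennreal (\<eta>/4) * ennreal Eb + ennreal (\<eta>/4) * ennreal Eb"
      using I1 I2 I3 by (intro add_mono mult_left_mono) auto
    also have "\<dots> = ennreal (Pb / (2 * \<eta>) + \<eta> * Eb / 2)"
      using \<eta>p by (simp add: ennreal_mult[symmetric] ennreal_plus[symmetric] Pb_def Eb_def del: ennreal_plus)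
    also have "\<dots> \<le> ennreal \<delta>" using key_real by (rule ennreal_leI)
    finally show ?thesis .
  qed
  have um1: "(\<lambda>x. 1 - u x) \<in> borel_measurable XS" using um by measurable
  have low: "(\<integral>\<^sup>+x. 1 - u x \<partial>XS) \<le> (\<integral>\<^sup>+x. emeasure (Q x) {h \<in> space Pr. gen_gap M n h x \<le> \<rho> h * t} \<partial>XS)"
  proof (rule nn_integral_mono)
    fix x assume x: "x \<in> space XS"
    show "1 - u x \<le> emeasure (Q x) {h \<in> space Pr. gen_gap M n h x \<le> \<rho> h * t}"
      unfolding claim2[OF x] by (rule ennreal_mono_minus) (rule claim1[OF x])
  qed
  have "1 = (\<integral>\<^sup>+x. 1 \<partial>XS)" by (simp add: X.emeasure_space_1)
  also have "\<dots> \<le> (\<integral>\<^sup>+x. (1 - u x) + u x \<partial>XS)"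
  proof (rule nn_integral_mono)
    fix x
    show "(1::ennreal) \<le> (1 - u x) + u x"
    proof (cases "u x \<le> 1")
      case True
      then show ?thesis by (simp add: diff_add_cancel_ennreal)
    next
      case False
      then have "1 \<le> u x" by simp
      also have "\<dots> \<le> (1 - u x) + u x" by simp
      finally show ?thesis .
    qed
  qed
  also have "\<dots> = (\<integral>\<^sup>+x. 1 - u x \<partial>XS) + (\<integral>\<^sup>+x. u x \<partial>XS)"
    by (rule nn_integral_add) (use um1 um in auto)
  also have "\<dots> \<le> (\<integral>\<^sup>+x. 1 - u x \<partial>XS) + ennreal \<delta>" using Iu by (rule add_left_mono)
  finally have one: "1 \<le> ennreal \<delta> + (\<integral>\<^sup>+x. 1 - u x \<partial>XS)" by (simp add: add.commute)
  have "ennreal (1 - \<delta>) = 1 - ennreal \<delta>" using ennreal_minus[of \<delta> 1] \<delta> by simp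
  also have "\<dots> \<le> (\<integral>\<^sup>+x. 1 - u x \<partial>XS)" using one by (simp add: ennreal_minus_le_iff)
  also note low
  finally show ?thesis unfolding t_def XS_def .
qed

end
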